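(* There exists no simple, locally finite lattice $S$ with more than two elements such that every finite sublattice of $S$ satisfies $(\mathrm{T}_\vee)$.
   Context: A lattice is simple if its only congruences are the identity and the total congruence. It is locally finite if every finitely generated sublattice is finite. For a finite lattice $A$, let $\mathrm{J}(A)$ be its set of join-irreducible elements; for $q\in\mathrm{J}(A)$ let $q_*$ be its unique lower cover. The join-dependency relation $D_A$ on $\mathrm{J}(A)$ is defined by: $p\,D_A\,q$ iff $p\neq q$ and there exists $x\in A$ with $p\leq q\vee x$ and $p\nleq q_*\vee x$. A finite lattice $A$ satisfies $(\mathrm{T}_\vee)$ if $D_A$ has no cycle. *)

theory Defs
  imports Main
begin

text \<open>Lattices are rendered by the type class lattice; the lattice S is the whole type.\<close>

definition lattice_congruence :: "('a::lattice \<times> 'a) set \<Rightarrow> bool" where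
  "lattice_congruence \<theta> \<longleftrightarrow> equiv UNIV \<theta> \<and>
     (\<forall>a b c d. (a, b) \<in> \<theta> \<and> (c, d) \<in> \<theta> \<longrightarrow>
        (sup a c, sup b d) \<in> \<theta> \<and> (inf a c, inf b d) \<in> \<theta>)"

definition simple_lattice :: "'a::lattice itself \<Rightarrow> bool" where
  "simple_lattice _ \<longleftrightarrow>
     (\<forall>\<theta>::('a \<times> 'a) set. lattice_congruence \<theta> \<longrightarrow> \<theta> = Id \<or> \<theta> = UNIV)"

definition lat_closed :: "'a::lattice set \<Rightarrow> bool" where
  "lat_closed A \<longleftrightarrow> (\<forall>x\<in>A. \<forall>y\<in>A. sup x y \<in> A \<and> inf x y \<in> A)"

definition sublattice :: "'a::lattice set \<Rightarrow> bool" where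
  "sublattice A \<longleftrightarrow> A \<noteq> {} \<and> lat_closed A"

definition gen_sublattice :: "'a::lattice set \<Rightarrow> 'a set" where
  "gen_sublattice X = \<Inter>{A. X \<subseteq> A \<and> lat_closed A}"

definition locally_finite_lattice :: "'a::lattice itself \<Rightarrow> bool" where
  "locally_finite_lattice _ \<longleftrightarrow>
     (\<forall>X::'a set. finite X \<longrightarrow> finite (gen_sublattice X))"

definition join_irreducibles :: "'a::lattice set \<Rightarrow> 'a set" where
  "join_irreducibles A = {q \<in> A. (\<exists>x\<in>A. x < q) \<and>
      (\<forall>a\<in>A. \<forall>b\<in>A. q = sup a b \<longrightarrow> q = a \<or> q = b)}"

definition lower_cover :: "'a::lattice set \<Rightarrow> 'a \<Rightarrow> 'a" where
  "lower_cover A q = (THE p. p \<in> A \<and> p < q \<and> \<not> (\<exists>z\<in>A. p < z \<and> z < q))"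

definition join_dep :: "'a::lattice set \<Rightarrow> ('a \<times> 'a) set" where
  "join_dep A = {(p, q). p \<in> join_irreducibles A \<and> q \<in> join_irreducibles A \<and> p \<noteq> q \<and>
      (\<exists>x\<in>A. p \<le> sup q x \<and> \<not> p \<le> sup (lower_cover A q) x)}"

definition T_join :: "'a::lattice set \<Rightarrow> bool" where
  "T_join A \<longleftrightarrow> acyclic (join_dep A)"

end

theory Submission
  imports Defs
begin

lemma lc:
  fixes A :: "'a::lattice set"
  assumes fin: "finite A" and cl: "lat_closed A" and sJ: "s \<in> join_irreducibles A"
  shows "lower_cover A s \<in> A \<and> lower_cover A s < s"
proof -
  let ?L = "{a\<in>A. a < s}"
  have ne: "?L \<noteq> {}" using sJ by (auto simp: join_irreducibles_def)
  obtain m where m: "m \<in> ?L" "\<forall>b\<in>?L. m \<le> b \<longrightarrow> m = b"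
    using finite_has_maximal[of ?L] fin ne by auto
  have max: "\<forall>a\<in>?L. a \<le> m"
  proof
    fix a assume a: "a \<in> ?L"
    have "sup a m \<in> A" using cl a m unfolding lat_closed_def by auto
    moreover have "sup a m \<le> s" using a m by auto
    moreover have "sup a m \<noteq> s"
    proof
      assume "sup a m = s"
      hence "s = a \<or> s = m" using sJ a m unfolding join_irreducibles_def by auto
      thus False using a m by auto
    qed
    ultimately have "sup a m \<in> ?L" by (simp add: order.not_eq_order_implies_strict)
    hence "m = sup a m" using m by auto
    thus "a \<le> m" by (metis sup.cobounded1)
  qed
  have "lower_cover A s = m" unfolding lower_cover_def
  proof (rule the_equality)
    show "m \<in> A \<and> m < s \<and> \<not>(\<exists>z\<in>A. m<z \<and> z<s)" using m max by force
  next
    fix p assume p: "p \<in> A \<and> p < s \<and> \<not>(\<exists>z\<in>A. p<z \<and> z<s)"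
    then have "p \<le> m" using max by auto
    thus "p = m" using p m by (metis (no_types, lifting) mem_Collect_eq order.order_iff_strict)
  qed
  thus ?thesis using m by auto
qed

lemma keyL:
  fixes A :: "'a::lattice set" and P :: "'a set"
  assumes fin: "finite A" and cl: "lat_closed A"
    and clos: "\<And>q i. q \<in> P \<Longrightarrow> (i,q) \<in> join_dep A \<Longrightarrow> i \<in> P"
    and jJ: "j \<in> join_irreducibles A" and jP: "j \<notin> P"
  shows "s \<in> A \<Longrightarrow> w \<in> A \<Longrightarrow> (\<forall>i\<in>join_irreducibles A - P. i \<le> s \<longrightarrow> i \<le> w)
     \<Longrightarrow> j \<le> sup s w \<Longrightarrow> j \<le> w"
proof (induction "card {x\<in>A. x<s}" arbitrary: s w rule: less_induct)
  case less
  have IH: "j \<le> w'" if h: "s' \<in> A" "s' < s" "w' \<in> A"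
     "\<forall>i\<in>join_irreducibles A - P. i \<le> s' \<longrightarrow> i \<le> w'" "j \<le> sup s' w'" for s' w'
  proof -
    have "{x\<in>A. x<s'} \<subset> {x\<in>A. x<s}" using h less.prems by auto
    hence "card {x\<in>A. x<s'} < card {x\<in>A. x<s}" using fin by (intro psubset_card_mono) auto
    thus "j \<le> w'" using less.hyps h by blast
  qed
  show ?case
  proof (cases "s \<le> w")
    case True thus ?thesis using less.prems by (simp add: sup_absorb2)
  next
    case sw: False
    show ?thesis
    proof (cases "s \<in> join_irreducibles A")
      case True
      have sP: "s \<in> P" using True sw less.prems by auto
      let ?c = "lower_cover A s"
      have c: "?c \<in> A" "?c < s" using lc[OF fin cl True] by auto
      show ?thesis
      proof (cases "j \<le> sup ?c w")
        case True
        have "\<forall>i\<in>join_irreducibles A - P. i \<le> ?c \<longrightarrow> i \<le> w"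
          using less.prems(3) c(2) by (meson order.trans less_imp_le)
        then show ?thesis using IH[OF c(1) c(2) less.prems(2)] True by blast
      next
        case False
        have "j \<noteq> s" using jP sP by auto
        hence "(j,s) \<in> join_dep A" unfolding join_dep_def using jJ True False less.prems by auto
        hence "j \<in> P" using clos sP by blast
        thus ?thesis using jP by blast
      qed
    next
      case False
      then consider "\<not>(\<exists>x\<in>A. x<s)" | a b where "a\<in>A" "b\<in>A" "s = sup a b" "s \<noteq> a" "s \<noteq> b"
        using less.prems(1) unfolding join_irreducibles_def by blast
      then show ?thesis
      proof cases
        case 1
        have "inf s w \<in> A" using cl less.prems unfolding lat_closed_def by auto
        hence "inf s w = s" using 1 by (metis inf.cobounded1 order.order_iff_strict)
        hence "s \<le> w" by (metis inf.cobounded2)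
        thus ?thesis using sw by blast
      next
        case 2
        have as: "a < s" "b < s" using 2 by (metis sup.cobounded1 sup.cobounded2 order.not_eq_order_implies_strict)+
        have bw: "sup b w \<in> A" using cl 2 less.prems unfolding lat_closed_def by auto
        have "j \<le> sup b w"
        proof (rule IH[OF 2(1) as(1) bw])
          show "\<forall>i\<in>join_irreducibles A - P. i \<le> a \<longrightarrow> i \<le> sup b w"
            using less.prems(3) as by (meson order.trans less_imp_le le_supI2)
          show "j \<le> sup a (sup b w)" using less.prems(4) 2 by (simp add: sup_assoc)
        qed
        moreover have "\<forall>i\<in>join_irreducibles A - P. i \<le> b \<longrightarrow> i \<le> w"
          using less.prems(3) as by (meson order.trans less_imp_le)
        ultimately show ?thesis using IH[OF 2(2) as(2) less.prems(2)] by blast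
      qed
    qed
  qed
qed


lemma exJ:
  fixes A :: "'a::lattice set"
  assumes fin: "finite A" and cl: "lat_closed A" and xA: "x \<in> A"
  shows "u \<in> A \<Longrightarrow> \<not> u \<le> x \<Longrightarrow> \<exists>j\<in>join_irreducibles A. j \<le> u \<and> \<not> j \<le> x"
proof (induction "card {y\<in>A. y<u}" arbitrary: u rule: less_induct)
  case less
  have IH: "\<exists>j\<in>join_irreducibles A. j \<le> u' \<and> \<not> j \<le> x" if h: "u' \<in> A" "u' < u" "\<not> u' \<le> x" for u'
  proof -
    have "{y\<in>A. y<u'} \<subset> {y\<in>A. y<u}" using h less.prems by auto
    hence "card {y\<in>A. y<u'} < card {y\<in>A. y<u}" using fin by (intro psubset_card_mono) auto
    thus ?thesis using less.hyps h by blast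
  qed
  show ?case
  proof (cases "u \<in> join_irreducibles A")
    case True thus ?thesis using less.prems by auto
  next
    case False
    then consider "\<not>(\<exists>y\<in>A. y<u)" | a b where "a\<in>A" "b\<in>A" "u = sup a b" "u \<noteq> a" "u \<noteq> b"
      using less.prems(1) unfolding join_irreducibles_def by blast
    then show ?thesis
    proof cases
      case 1
      have "inf u x \<in> A" using cl less.prems xA unfolding lat_closed_def by auto
      hence "inf u x = u" using 1 by (metis inf.cobounded1 order.order_iff_strict)
      hence "u \<le> x" by (metis inf.cobounded2)
      thus ?thesis using less.prems by blast
    next
      case 2
      have as: "a < u" "b < u" using 2 by (metis sup.cobounded1 sup.cobounded2 order.not_eq_order_implies_strict)+
      have "\<not> a \<le> x \<or> \<not> b \<le> x" using 2 less.prems by auto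
      thus ?thesis using IH 2 as by (meson order.strict_implies_order order.trans)
    qed
  qed
qed

definition theta :: "'a::lattice set \<Rightarrow> 'a set \<Rightarrow> ('a \<times> 'a) set" where
  "theta A P = {(u,v). \<forall>i\<in>join_irreducibles A - P. (i \<le> u) = (i \<le> v)}"

lemma theta_sup1:
  fixes A :: "'a::lattice set"
  assumes fin: "finite A" and cl: "lat_closed A"
    and clos: "\<And>q i. q \<in> P \<Longrightarrow> (i,q) \<in> join_dep A \<Longrightarrow> i \<in> P"
    and h: "u \<in> A" "v \<in> A" "t \<in> A" "(u,v) \<in> theta A P"
    and i: "i \<in> join_irreducibles A - P" "i \<le> sup u t"
  shows "i \<le> sup v t"
proof -
  have w: "sup v t \<in> A" using cl h unfolding lat_closed_def by auto
  show ?thesis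
  proof (rule keyL[OF fin cl clos _ _ h(1) w])
    show "i \<in> join_irreducibles A" "i \<notin> P" using i by auto
    show "\<forall>i\<in>join_irreducibles A - P. i \<le> u \<longrightarrow> i \<le> sup v t"
      using h(4) unfolding theta_def by (auto intro: le_supI1)
    show "i \<le> sup u (sup v t)" using i(2) by (meson order.trans le_sup_iff sup_ge1 sup_ge2)
  qed
qed

definition Acong :: "'a::lattice set \<Rightarrow> ('a \<times> 'a) set \<Rightarrow> bool" where
  "Acong A th \<longleftrightarrow> (\<forall>u\<in>A. (u,u)\<in>th) \<and> (\<forall>u v. (u,v)\<in>th \<longrightarrow> (v,u)\<in>th) \<and>
     (\<forall>u v w. (u,v)\<in>th \<longrightarrow> (v,w)\<in>th \<longrightarrow> (u,w)\<in>th) \<and>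
     (\<forall>u\<in>A. \<forall>v\<in>A. \<forall>t\<in>A. (u,v)\<in>th \<longrightarrow> (sup u t, sup v t)\<in>th \<and> (inf u t, inf v t)\<in>th)"

lemma theta_Acong:
  fixes A :: "'a::lattice set"
  assumes fin: "finite A" and cl: "lat_closed A"
    and clos: "\<And>q i. q \<in> P \<Longrightarrow> (i,q) \<in> join_dep A \<Longrightarrow> i \<in> P"
  shows "Acong A (theta A P)"
  unfolding Acong_def
proof (intro conjI ballI allI impI)
  fix u v t assume h: "u \<in> A" "v \<in> A" "t \<in> A" "(u,v) \<in> theta A P"
  have h': "(v,u) \<in> theta A P" using h(4) unfolding theta_def by auto
  have s1: "i \<le> sup v t" if "i \<in> join_irreducibles A - P" "i \<le> sup u t" for i
    using theta_sup1[of A P u v t i] fin cl clos h that by blast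
  have s2: "i \<le> sup u t" if "i \<in> join_irreducibles A - P" "i \<le> sup v t" for i
    using theta_sup1[of A P v u t i] fin cl clos h h' that by blast
  show "(sup u t, sup v t) \<in> theta A P"
    using s1 s2 unfolding theta_def by blast
  show "(inf u t, inf v t) \<in> theta A P" using h(4) unfolding theta_def by auto
qed (auto simp: theta_def)

inductive_set cg :: "'a::lattice \<Rightarrow> 'a \<Rightarrow> ('a \<times> 'a) set" for a b where
  cg_base: "(a,b) \<in> cg a b"
| cg_refl: "(u,u) \<in> cg a b"
| cg_sym: "(u,v) \<in> cg a b \<Longrightarrow> (v,u) \<in> cg a b"
| cg_trans: "(u,v) \<in> cg a b \<Longrightarrow> (v,w) \<in> cg a b \<Longrightarrow> (u,w) \<in> cg a b"
| cg_sup: "(u,v) \<in> cg a b \<Longrightarrow> (sup u t, sup v t) \<in> cg a b"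
| cg_inf: "(u,v) \<in> cg a b \<Longrightarrow> (inf u t, inf v t) \<in> cg a b"

lemma cg_cong: "lattice_congruence (cg a b)"
  unfolding lattice_congruence_def
proof (intro conjI allI impI)
  show "equiv UNIV (cg a b)"
  proof (rule equivI)
    show "refl_on UNIV (cg a b)" by (rule refl_onI) (auto intro: cg_refl)
    show "sym (cg a b)" by (rule symI) (rule cg_sym)
    show "trans (cg a b)" by (rule transI) (rule cg_trans)
  qed auto
next
  fix x y c d assume h: "(x, y) \<in> cg a b \<and> (c, d) \<in> cg a b"
  have "(sup x c, sup y c) \<in> cg a b" using h by (auto intro: cg_sup)
  moreover have "(sup c y, sup d y) \<in> cg a b" using h by (auto intro: cg_sup)
  ultimately show "(sup x c, sup y d) \<in> cg a b" by (metis cg_trans sup_commute)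
  have "(inf x c, inf y c) \<in> cg a b" using h by (auto intro: cg_inf)
  moreover have "(inf c y, inf d y) \<in> cg a b" using h by (auto intro: cg_inf)
  ultimately show "(inf x c, inf y d) \<in> cg a b" by (metis cg_trans inf_commute)
qed

lemma AcD:
  assumes "Acong A th"
  shows "u \<in> A \<Longrightarrow> (u,u)\<in>th" "(u,v)\<in>th \<Longrightarrow> (v,u)\<in>th"
    "(u,v)\<in>th \<Longrightarrow> (v,w)\<in>th \<Longrightarrow> (u,w)\<in>th"
    "u \<in> A \<Longrightarrow> v \<in> A \<Longrightarrow> t \<in> A \<Longrightarrow> (u,v)\<in>th \<Longrightarrow> (sup u t, sup v t)\<in>th"
    "u \<in> A \<Longrightarrow> v \<in> A \<Longrightarrow> t \<in> A \<Longrightarrow> (u,v)\<in>th \<Longrightarrow> (inf u t, inf v t)\<in>th"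
  using assms unfolding Acong_def by blast+

lemma cg_transfer:
  assumes "(c,d) \<in> cg a b"
  shows "\<exists>F. finite F \<and> a \<in> F \<and> b \<in> F \<and> c \<in> F \<and> d \<in> F \<and>
     (\<forall>A th. F \<subseteq> A \<longrightarrow> Acong A th \<longrightarrow> (a,b) \<in> th \<longrightarrow> (c,d) \<in> th)"
  using assms
proof (induction rule: cg.induct)
  case cg_base
  show ?case by (rule exI[of _ "{a,b}"]) auto
next
  case (cg_refl u)
  show ?case by (rule exI[of _ "{a,b,u}"]) (auto intro: AcD(1))
next
  case (cg_sym u v)
  then obtain F where F: "finite F \<and> a \<in> F \<and> b \<in> F \<and> u \<in> F \<and> v \<in> F \<and>
     (\<forall>A th. F \<subseteq> A \<longrightarrow> Acong A th \<longrightarrow> (a,b) \<in> th \<longrightarrow> (u,v) \<in> th)" by blast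
  show ?case by (rule exI[of _ F]) (use F in \<open>blast intro: AcD(2)\<close>)
next
  case (cg_trans u v w)
  then obtain F G where F: "finite F \<and> a \<in> F \<and> b \<in> F \<and> u \<in> F \<and> v \<in> F \<and>
     (\<forall>A th. F \<subseteq> A \<longrightarrow> Acong A th \<longrightarrow> (a,b) \<in> th \<longrightarrow> (u,v) \<in> th)"
    and G: "finite G \<and> a \<in> G \<and> b \<in> G \<and> v \<in> G \<and> w \<in> G \<and>
     (\<forall>A th. G \<subseteq> A \<longrightarrow> Acong A th \<longrightarrow> (a,b) \<in> th \<longrightarrow> (v,w) \<in> th)" by blast
  show ?case
  proof (rule exI[of _ "F \<union> G"], intro conjI allI impI)
    fix A th assume "F \<union> G \<subseteq> A" "Acong A th" "(a,b) \<in> th"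
    then have "(u,v) \<in> th" "(v,w) \<in> th" using F G by auto
    thus "(u,w) \<in> th" using \<open>Acong A th\<close> by (rule AcD(3)[rotated 1])
  qed (use F G in auto)
next
  case (cg_sup u v t)
  then obtain F where F: "finite F \<and> a \<in> F \<and> b \<in> F \<and> u \<in> F \<and> v \<in> F \<and>
     (\<forall>A th. F \<subseteq> A \<longrightarrow> Acong A th \<longrightarrow> (a,b) \<in> th \<longrightarrow> (u,v) \<in> th)" by blast
  show ?case
  proof (rule exI[of _ "F \<union> {t, sup u t, sup v t}"], intro conjI allI impI)
    fix A th assume h: "F \<union> {t, sup u t, sup v t} \<subseteq> A" "Acong A th" "(a,b) \<in> th"
    then have "(u,v) \<in> th" using F by auto
    thus "(sup u t, sup v t) \<in> th" using h F by (intro AcD(4)[OF h(2)]) auto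
  qed (use F in auto)
next
  case (cg_inf u v t)
  then obtain F where F: "finite F \<and> a \<in> F \<and> b \<in> F \<and> u \<in> F \<and> v \<in> F \<and>
     (\<forall>A th. F \<subseteq> A \<longrightarrow> Acong A th \<longrightarrow> (a,b) \<in> th \<longrightarrow> (u,v) \<in> th)" by blast
  show ?case
  proof (rule exI[of _ "F \<union> {t, inf u t, inf v t}"], intro conjI allI impI)
    fix A th assume h: "F \<union> {t, inf u t, inf v t} \<subseteq> A" "Acong A th" "(a,b) \<in> th"
    then have "(u,v) \<in> th" using F by auto
    thus "(inf u t, inf v t) \<in> th" using h F by (intro AcD(5)[OF h(2)]) auto
  qed (use F in auto)
qed

lemma gen_closed: "lat_closed (gen_sublattice X)" "X \<subseteq> gen_sublattice X"
  unfolding gen_sublattice_def lat_closed_def by blast+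

lemma chain3:
  fixes a b c :: "'a::lattice"
  assumes "a \<noteq> b" "a \<noteq> c" "b \<noteq> c"
  shows "\<exists>x y z :: 'a. x < y \<and> y < z"
proof -
  have inc: "\<exists>x y z :: 'a. x < y \<and> y < z" if "\<not> u \<le> v" "\<not> v \<le> u" for u v :: 'a
  proof -
    have "inf u v < u" using that by (metis inf.cobounded1 inf.cobounded2 order.not_eq_order_implies_strict)
    moreover have "u < sup u v" using that by (metis sup.cobounded1 sup.cobounded2 order.not_eq_order_implies_strict)
    ultimately show ?thesis by blast
  qed
  show ?thesis
  proof (cases "(a \<le> b \<or> b \<le> a) \<and> (a \<le> c \<or> c \<le> a) \<and> (b \<le> c \<or> c \<le> b)")
    case True
    then have "(a < b \<or> b < a) \<and> (a < c \<or> c < a) \<and> (b < c \<or> c < b)"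
      using assms by (simp add: order.order_iff_strict)
    then show ?thesis by blast
  next
    case False
    then show ?thesis using inc by blast
  qed
qed

theorem theorem6p1:
  assumes "simple_lattice TYPE('a::lattice)"
    and "locally_finite_lattice TYPE('a)"
    and "\<exists>a b c :: 'a. a \<noteq> b \<and> a \<noteq> c \<and> b \<noteq> c"
    and "\<forall>A :: 'a set. finite A \<and> sublattice A \<longrightarrow> T_join A"
  shows False
proof -
  obtain x y z :: 'a where xyz: "x < y" "y < z" using assms(3) chain3 by blast
  have univ: "cg u v = UNIV" if "u \<noteq> v" for u v :: 'a
  proof -
    have "cg u v = Id \<or> cg u v = UNIV" using assms(1) cg_cong unfolding simple_lattice_def by blast
    moreover have "(u,v) \<in> cg u v" by (rule cg_base)
    ultimately show ?thesis using that by auto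
  qed
  have "(y,z) \<in> cg x y" using univ xyz by auto
  from cg_transfer[OF this] obtain F1 where F1: "finite F1 \<and> x \<in> F1 \<and> y \<in> F1 \<and> z \<in> F1 \<and>
     (\<forall>A th. F1 \<subseteq> A \<longrightarrow> Acong A th \<longrightarrow> (x,y) \<in> th \<longrightarrow> (y,z) \<in> th)" by blast
  have "(x,y) \<in> cg y z" using univ xyz by auto
  from cg_transfer[OF this] obtain F2 where F2: "finite F2 \<and> y \<in> F2 \<and> z \<in> F2 \<and> x \<in> F2 \<and>
     (\<forall>A th. F2 \<subseteq> A \<longrightarrow> Acong A th \<longrightarrow> (y,z) \<in> th \<longrightarrow> (x,y) \<in> th)" by blast
  define A where "A = gen_sublattice (F1 \<union> F2)"
  have "finite (F1 \<union> F2)" using F1 F2 by simp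
  hence fin: "finite A" using assms(2) unfolding A_def locally_finite_lattice_def by blast
  have cl: "lat_closed A" unfolding A_def by (rule gen_closed)
  have sub: "F1 \<subseteq> A" "F2 \<subseteq> A" using gen_closed(2)[of "F1 \<union> F2"] unfolding A_def by auto
  have xA: "x \<in> A" "y \<in> A" "z \<in> A" using sub F1 by auto
  have "sublattice A" unfolding sublattice_def using cl xA by auto
  hence acyc: "acyclic (join_dep A)" using assms(4) fin unfolding T_join_def by blast
  let ?J = "join_irreducibles A"
  let ?D = "join_dep A"
  define Cl where "Cl P = {i. \<exists>p\<in>P. (i,p) \<in> ?D\<^sup>*}" for P
  have Clclos: "i \<in> Cl P" if "q \<in> Cl P" "(i,q) \<in> ?D" for q i P
    using that unfolding Cl_def by (blast intro: converse_rtrancl_into_rtrancl)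
  have Clsub: "P \<subseteq> Cl P" for P unfolding Cl_def by auto
  define P1 where "P1 = {j\<in>?J. j \<le> y \<and> \<not> j \<le> x}"
  define P2 where "P2 = {j\<in>?J. j \<le> z \<and> \<not> j \<le> y}"
  have disj: "P1 \<inter> P2 = {}" unfolding P1_def P2_def using xyz by auto
  have "\<not> y \<le> x" using xyz by (simp add: leD)
  hence ne: "P1 \<noteq> {}" using exJ[OF fin cl xA(1) xA(2)] unfolding P1_def by blast
  have ac1: "Acong A (theta A (Cl P1))" by (rule theta_Acong[OF fin cl]) (use Clclos in blast)
  have "(x,y) \<in> theta A (Cl P1)" unfolding theta_def
  proof (clarify)
    fix i assume i: "i \<in> ?J" "i \<notin> Cl P1"
    show "(i \<le> x) = (i \<le> y)"
    proof
      assume "i \<le> x" thus "i \<le> y" using xyz by (meson order.trans order.strict_implies_order)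
    next
      assume "i \<le> y"
      show "i \<le> x"
      proof (rule ccontr)
        assume "\<not> i \<le> x"
        hence "i \<in> P1" unfolding P1_def using i \<open>i \<le> y\<close> by blast
        thus False using i Clsub by blast
      qed
    qed
  qed
  hence "(y,z) \<in> theta A (Cl P1)" using F1 sub ac1 by blast
  hence P21: "P2 \<subseteq> Cl P1" unfolding theta_def P2_def by blast
  have ac2: "Acong A (theta A (Cl P2))" by (rule theta_Acong[OF fin cl]) (use Clclos in blast)
  have "(y,z) \<in> theta A (Cl P2)" unfolding theta_def
  proof (clarify)
    fix i assume i: "i \<in> ?J" "i \<notin> Cl P2"
    show "(i \<le> y) = (i \<le> z)"
    proof
      assume "i \<le> y" thus "i \<le> z" using xyz by (meson order.trans order.strict_implies_order)
    next
      assume "i \<le> z"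
      show "i \<le> y"
      proof (rule ccontr)
        assume "\<not> i \<le> y"
        hence "i \<in> P2" unfolding P2_def using i \<open>i \<le> z\<close> by blast
        thus False using i Clsub by blast
      qed
    qed
  qed
  hence "(x,y) \<in> theta A (Cl P2)" using F2 sub ac2 by blast
  hence P12: "P1 \<subseteq> Cl P2" unfolding theta_def P1_def by blast
  let ?Q = "P1 \<union> P2"
  have succ: "\<exists>r\<in>?Q. (q,r) \<in> ?D\<^sup>+" if "q \<in> ?Q" for q
  proof -
    have "\<exists>p\<in>?Q. (q,p) \<in> ?D\<^sup>* \<and> q \<noteq> p"
    proof (cases "q \<in> P1")
      case True
      hence "q \<in> Cl P2" using P12 by blast
      then obtain p where "p \<in> P2" "(q,p) \<in> ?D\<^sup>*" unfolding Cl_def by blast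
      moreover have "q \<noteq> p" using True \<open>p \<in> P2\<close> disj by blast
      ultimately show ?thesis by blast
    next
      case False
      hence q2: "q \<in> P2" using that by blast
      hence "q \<in> Cl P1" using P21 by blast
      then obtain p where "p \<in> P1" "(q,p) \<in> ?D\<^sup>*" unfolding Cl_def by blast
      moreover have "q \<noteq> p" using q2 \<open>p \<in> P1\<close> disj by blast
      ultimately show ?thesis by blast
    qed
    then obtain r where r: "r \<in> ?Q" "(q,r) \<in> ?D\<^sup>*" "q \<noteq> r" by blast
    have "(q,r) \<in> ?D\<^sup>+" using r(2,3) by (simp add: rtrancl_eq_or_trancl)
    thus ?thesis using r(1) by blast
  qed
  have "?D \<subseteq> A \<times> A" unfolding join_dep_def join_irreducibles_def by blast
  hence "finite ?D" using fin by (simp add: finite_subset)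
  hence "wf (?D\<inverse>)" using acyc by (rule finite_acyclic_wf_converse)
  hence "wf ((?D\<inverse>)\<^sup>+)" by (rule wf_trancl)
  hence wfc: "wf ((?D\<^sup>+)\<inverse>)" by (simp add: trancl_converse)
  obtain q0 where "q0 \<in> ?Q" using ne by auto
  then obtain m where m: "m \<in> ?Q" "\<forall>r. (r,m) \<in> (?D\<^sup>+)\<inverse> \<longrightarrow> r \<notin> ?Q"
    using wfc unfolding wf_eq_minimal by blast
  show False using succ[OF m(1)] m(2) by auto
qed

end
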